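(* Given any finite collection of Jordan blocks $J_1,\dots,J_k$, where $J_i$ has eigenvalue $\lambda_i\in\mathbb C$ and size $d_i\ge1$, there exists a purely competitive real matrix $B$ whose Jordan decomposition contains this multiset of Jordan blocks.
   Context: A square real matrix $B$ is purely competitive if $B_{ij}\le0$ for all $i\ne j$ and $B_{ii}=0$ for all $i$. *)

theory Defs
  imports "Jordan_Normal_Form.Jordan_Normal_Form"
begin

definition purely_competitive :: "real mat \<Rightarrow> bool" where
  "purely_competitive B \<longleftrightarrow> dim_row B = dim_col B \<and>
     (\<forall>i < dim_row B. \<forall>j < dim_col B. i \<noteq> j \<longrightarrow> B $$ (i, j) \<le> 0) \<and>
     (\<forall>i < dim_row B. B $$ (i, i) = 0)"

end

theory Submission
  imports Defs
begin

lemma sum_split_mult: "(\<Sum>t<k*d. f t) = (\<Sum>a<k. \<Sum>j<d. f (a*d+j :: nat) :: 'a :: comm_monoid_add)"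
proof (induct k)
  case 0 then show ?case by simp
next
  case (Suc k)
  have e: "{..<Suc k * d} = {..<k*d} \<union> {k*d..<k*d+d}" by auto
  have "(\<Sum>t<Suc k*d. f t) = (\<Sum>t<k*d. f t) + (\<Sum>t\<in>{k*d..<k*d+d}. f t)"
    unfolding e by (subst sum.union_disjoint, auto)
  also have "(\<Sum>t\<in>{k*d..<k*d+d}. f t) = (\<Sum>j<d. f (k*d+j))"
    using sum.shift_bounds_nat_ivl[of f 0 "k*d" d]
    by (simp add: atLeast0LessThan add.commute)
  finally show ?case using Suc by simp
qed

definition kron :: "'a :: comm_ring_1 mat \<Rightarrow> 'a mat \<Rightarrow> 'a mat" where
  "kron X Z = mat (dim_row X * dim_row Z) (dim_col X * dim_col Z)
     (\<lambda>(r,c). X $$ (r div dim_row Z, c div dim_col Z) * Z $$ (r mod dim_row Z, c mod dim_col Z))"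

lemma kron_dim[simp]: "dim_row (kron X Z) = dim_row X * dim_row Z" "dim_col (kron X Z) = dim_col X * dim_col Z"
  by (auto simp: kron_def)

lemma kron_carrier: "X \<in> carrier_mat m k \<Longrightarrow> Z \<in> carrier_mat n n \<Longrightarrow> kron X Z \<in> carrier_mat (m*n) (k*n)"
  by auto

lemma kron_index: "X \<in> carrier_mat m k \<Longrightarrow> Z \<in> carrier_mat n n \<Longrightarrow> r < m*n \<Longrightarrow> c < k*n \<Longrightarrow>
   kron X Z $$ (r,c) = X $$ (r div n, c div n) * Z $$ (r mod n, c mod n)"
  by (auto simp: kron_def)

lemma div_lt_mult: "r < m * (n::nat) \<Longrightarrow> r div n < m"
  by (simp add: less_mult_imp_div_less)

lemma kron_mult: assumes X: "X \<in> carrier_mat m k" and X': "X' \<in> carrier_mat k l"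
  and Z: "Z \<in> carrier_mat n n" and Z': "Z' \<in> carrier_mat n n" and n: "n > 0"
shows "kron X Z * kron X' Z' = kron (X * X') (Z * Z')"
proof (rule eq_matI)
  fix r c assume r: "r < dim_row (kron (X * X') (Z * Z'))" and c: "c < dim_col (kron (X * X') (Z * Z'))"
  from r c X X' Z Z' have r: "r < m*n" and c: "c < l * n" by auto
  have rd: "r div n < m" using r div_lt_mult by blast
  have cd: "c div n < l" using c div_lt_mult by blast
  have "(kron X Z * kron X' Z') $$ (r,c) = (\<Sum>t<k*n. kron X Z $$ (r,t) * kron X' Z' $$ (t,c))"
    using r c X X' Z Z' by (simp add: scalar_prod_def atLeast0LessThan)
  also have "\<dots> = (\<Sum>a<k. \<Sum>j<n. kron X Z $$ (r,a*n+j) * kron X' Z' $$ (a*n+j,c))"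
    by (rule sum_split_mult)
  also have "\<dots> = (\<Sum>a<k. \<Sum>j<n. (X $$ (r div n, a) * X' $$ (a, c div n)) * (Z $$ (r mod n, j) * Z' $$ (j, c mod n)))"
  proof (intro sum.cong refl)
    fix a j assume a: "a \<in> {..<k}" and j: "j \<in> {..<n}"
    have "Suc a * n \<le> k * n" using a by (intro mult_le_mono1, auto)
    then have t: "a*n+j < k*n" using j by auto
    have "(a*n+j) div n = a" "(a*n+j) mod n = j" using j n by auto
    then show "kron X Z $$ (r,a*n+j) * kron X' Z' $$ (a*n+j,c) = (X $$ (r div n, a) * X' $$ (a, c div n)) * (Z $$ (r mod n, j) * Z' $$ (j, c mod n))"
      using kron_index[OF X Z r t] kron_index[OF X' Z' t c] by (simp add: ac_simps)
  qed
  also have "\<dots> = (\<Sum>a<k. X $$ (r div n, a) * X' $$ (a, c div n)) * (\<Sum>j<n. Z $$ (r mod n, j) * Z' $$ (j, c mod n))"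
    by (simp add: sum_product)
  also have "\<dots> = kron (X * X') (Z * Z') $$ (r,c)"
    using r c rd cd X X' Z Z' n
    by (subst kron_index[of _ m l _ n], auto simp: scalar_prod_def atLeast0LessThan)
  finally show "(kron X Z * kron X' Z') $$ (r,c) = kron (X * X') (Z * Z') $$ (r,c)" .
qed (insert X X' Z Z', auto)

lemma kron_add: assumes "X \<in> carrier_mat m k" "Y \<in> carrier_mat m k" "Z \<in> carrier_mat n n"
  shows "kron (X + Y) Z = kron X Z + kron Y Z"
  by (rule eq_matI, insert assms, auto simp: kron_def div_lt_mult algebra_simps)

lemma kron_one: assumes "n > 0" shows "kron (1\<^sub>m m) (1\<^sub>m n) = (1\<^sub>m (m*n) :: 'a :: comm_ring_1 mat)"
proof (rule eq_matI)
  fix i j assume "i < dim_row (1\<^sub>m (m*n) :: 'a mat)" "j < dim_col (1\<^sub>m (m*n) :: 'a mat)"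
  then have i: "i < m*n" and j: "j < m*n" by auto
  have "(i div n = j div n \<and> i mod n = j mod n) = (i = j)"
    by (metis div_mult_mod_eq)
  then show "kron (1\<^sub>m m) (1\<^sub>m n) $$ (i, j) = (1\<^sub>m (m*n) :: 'a mat) $$ (i, j)"
    using i j assms by (auto simp: kron_def div_lt_mult)
qed auto

lemma map_kron: assumes "X \<in> carrier_mat m k" "Z \<in> carrier_mat n n" "n > 0"
  shows "map_mat (of_real :: real \<Rightarrow> complex) (kron X Z) = kron (map_mat of_real X) (map_mat of_real Z)"
  by (rule eq_matI, insert assms, auto simp: kron_def div_lt_mult)

lemma div3_cases: assumes "r < 3 * (d::nat)"
  shows "(r < d \<and> r div d = 0 \<and> r mod d = r) \<or> (d \<le> r \<and> r < 2*d \<and> r div d = 1 \<and> r mod d = r - d)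
     \<or> (2*d \<le> r \<and> r div d = 2 \<and> r mod d = r - 2*d)"
proof -
  consider "r < d" | "d \<le> r \<and> r < 2*d" | "2*d \<le> r" by linarith
  then show ?thesis
  proof cases
    case 1 then show ?thesis by auto
  next
    case 2
    then have "r div d = 1" by (simp add: div_nat_eqI)
    moreover have "r - d < d" using 2 by linarith
    then have "r mod d = r - d" using 2 by (simp add: le_mod_geq)
    ultimately show ?thesis using 2 by auto
  next
    case 3
    then have "r div d = 2" using assms by (simp add: div_nat_eqI)
    moreover have "r mod d = r - 2*d" using 3 assms by (metis \<open>r div d = 2\<close> minus_div_mult_eq_mod mult.commute)
    ultimately show ?thesis using 3 by auto
  qed
qed

definition diag3 :: "(nat \<Rightarrow> 'a :: comm_ring_1) \<Rightarrow> 'a mat" where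
  "diag3 mu = mat 3 3 (\<lambda>(a,b). if a = b then mu a else 0)"

lemma jm_uniform: assumes d: "d > 0"
  shows "i < length as * d \<Longrightarrow> j < length as * d \<Longrightarrow> jordan_matrix (map (\<lambda>a. (d,a)) as) $$ (i,j) =
    (if i div d = j div d then jordan_block d (as ! (i div d)) $$ (i mod d, j mod d) else (0 :: 'a :: comm_ring_1))"
proof (induct as arbitrary: i j)
  case Nil then show ?case by simp
next
  case (Cons a as)
  have jm: "jordan_matrix (map (\<lambda>a. (d,a)) (a # as)) = four_block_mat (jordan_block d a)
     (0\<^sub>m d (length as * d)) (0\<^sub>m (length as * d) d) (jordan_matrix (map (\<lambda>a. (d,a)) as))"
    using jordan_matrix_Cons[of d a "map (\<lambda>a. (d,a)) as"] by (simp add: o_def sum_list_triv)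
  have dims: "dim_row (jordan_matrix (map (\<lambda>a. (d,a)) as)) = length as * d"
     "dim_col (jordan_matrix (map (\<lambda>a. (d,a)) as)) = length as * d"
    by (simp_all add: o_def sum_list_triv)
  have i: "i < d + length as * d" and j: "j < d + length as * d" using Cons by auto
  show ?case
  proof (cases "i < d")
    case True
    then show ?thesis
    proof (cases "j < d")
      case True
      with \<open>i < d\<close> show ?thesis unfolding jm using i j dims by simp
    next
      case False
      then have "j div d \<noteq> 0" using d by (simp add: div_eq_0_iff)
      with \<open>i < d\<close> False show ?thesis unfolding jm using i j dims by simp
    qed
  next
    case False
    note iF = False
    have idiv: "i div d = Suc ((i - d) div d)" "i mod d = (i - d) mod d" using False d
      by (simp_all add: le_div_geq le_mod_geq)
    show ?thesis
    proof (cases "j < d")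
      case True
      then have "j div d = 0" by auto
      moreover have "i div d \<noteq> 0" using iF d by (simp add: div_eq_0_iff)
      ultimately show ?thesis using iF True unfolding jm using i j dims by simp
    next
      case False
      have jdiv: "j div d = Suc ((j - d) div d)" "j mod d = (j - d) mod d" using False d
        by (simp_all add: le_div_geq le_mod_geq)
      have IH: "jordan_matrix (map (\<lambda>a. (d,a)) as) $$ (i - d, j - d) =
        (if (i-d) div d = (j-d) div d then jordan_block d (as ! ((i-d) div d)) $$ ((i-d) mod d, (j-d) mod d) else 0)"
        using Cons(1)[of "i - d" "j - d"] i j iF False by auto
      show ?thesis unfolding jm using i j dims iF False IH idiv jdiv by simp
    qed
  qed
qed

lemma jordan3: assumes d: "d > 0"
  shows "kron (diag3 mu) (1\<^sub>m d) + kron (1\<^sub>m 3) (jordan_block d 0) =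
    (jordan_matrix [(d, mu 0), (d, mu 1), (d, mu 2)] :: 'a :: comm_ring_1 mat)"
proof (rule eq_matI)
  have lst: "[(d, mu 0), (d, mu 1), (d, mu 2)] = map (\<lambda>a. (d,a)) (map mu [0..<3])"
    by (simp add: upt_rec numeral_2_eq_2)
  fix i j assume "i < dim_row (jordan_matrix [(d, mu 0), (d, mu 1), (d, mu 2)] :: 'a mat)"
    "j < dim_col (jordan_matrix [(d, mu 0), (d, mu 1), (d, mu 2)] :: 'a mat)"
  then have i: "i < 3*d" and j: "j < 3*d" by auto
  have id: "i div d < 3" "j div d < 3" using i j div_lt_mult by auto
  have im: "i mod d < d" "j mod d < d" using d by auto
  have D: "diag3 mu \<in> carrier_mat 3 3" by (simp add: diag3_def)
  have L: "(kron (diag3 mu) (1\<^sub>m d) + kron (1\<^sub>m 3) (jordan_block d 0)) $$ (i,j) =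
    diag3 mu $$ (i div d, j div d) * (if i mod d = j mod d then 1 else 0) +
    (if i div d = j div d then 1 else 0) * (if Suc (i mod d) = j mod d then 1 else 0)"
    using i j d D id im by (simp add: kron_index[OF D one_carrier_mat] kron_index[OF one_carrier_mat jordan_block_carrier])
  have R: "(jordan_matrix [(d, mu 0), (d, mu 1), (d, mu 2)] :: 'a mat) $$ (i,j) = 
    (if i div d = j div d then jordan_block d (mu (i div d)) $$ (i mod d, j mod d) else 0)"
    unfolding lst using jm_uniform[OF d, of i "map mu [0..<3]" j] i j id by simp
  show "(kron (diag3 mu) (1\<^sub>m d) + kron (1\<^sub>m 3) (jordan_block d 0)) $$ (i,j) =
    (jordan_matrix [(d, mu 0), (d, mu 1), (d, mu 2)] :: 'a mat) $$ (i,j)"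
    unfolding L R using id im by (auto simp: diag3_def)
qed auto

definition w :: complex where "w = Complex (-1/2) (sqrt 3 / 2)"

lemma w2: "w^2 = Complex (-1/2) (- sqrt 3 / 2)"
  by (simp add: w_def power2_eq_square complex_eq_iff)

lemma w3: "w^3 = 1"
proof -
  have "w^3 = w^2 * w" by (simp add: power3_eq_cube power2_eq_square)
  also have "\<dots> = Complex (-1/2) (- sqrt 3 / 2) * Complex (-1/2) (sqrt 3 / 2)"
    unfolding w2 by (simp add: w_def)
  also have "\<dots> = 1" by (simp add: complex_eq_iff)
  finally show ?thesis .
qed

lemma w_pow_mod: "w ^ n = w ^ (n mod 3)"
proof -
  have "w ^ n = (w^3)^(n div 3) * w^(n mod 3)"
    unfolding power_mult[symmetric] power_add[symmetric] by simp
  then show ?thesis by (simp add: w3)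
qed

lemma wsum: "1 + w + w^2 = 0"
  unfolding w2 by (simp add: w_def complex_eq_iff)
lemma w_pow_big: "3 \<le> n \<Longrightarrow> w ^ n = w ^ (n mod 3)" using w_pow_mod by blast
lemma w_mult_pow: "w * w ^ n = w ^ Suc n" "w ^ n * w = w ^ Suc n" "w^n * w^m = w^(n+m)" by (simp_all add: power_add)
lemma w4: "w^4 = w" using w_pow_mod[of 4] by simp
lemma wmul: "w * w = w^2" "w * w^2 = 1" "w^2 * w = 1" "w^2 * w^2 = w"
  using w3 w4 by (simp_all add: power2_eq_square power3_eq_cube power4_eq_xxxx mult.assoc)

lemma ws: "w^2 + w + 1 = 0" "w + w^2 + 1 = 0" "1 + w^2 + w = 0" using wsum by (simp_all add: algebra_simps)

definition FF :: "complex mat" where "FF = mat 3 3 (\<lambda>(a,b). w ^ (a*b))"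
definition GG :: "complex mat" where "GG = mat 3 3 (\<lambda>(a,b). w ^ (2*a*b) / 3)"
definition Pc :: "real \<Rightarrow> real \<Rightarrow> real \<Rightarrow> real mat" where
  "Pc x y z = mat 3 3 (\<lambda>(a,b). if a = b then x else if b = (a+1) mod 3 then y else z)"
definition mu :: "real \<Rightarrow> real \<Rightarrow> real \<Rightarrow> nat \<Rightarrow> complex" where
  "mu x y z k = of_real x + of_real y * w ^ k + of_real z * w ^ (2*k)"

lemma less3: "(i::nat) < 3 \<Longrightarrow> i = 0 \<or> i = 1 \<or> i = 2" by auto

lemma sum3: "(\<Sum>i\<in>{0..<3::nat}. f i) = f 0 + f 1 + f 2"
  by (simp add: numeral_3_eq_3 numeral_2_eq_2)

lemma FG: "FF * GG = 1\<^sub>m 3"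
proof (rule eq_matI)
  fix i j assume "i < dim_row (1\<^sub>m 3 :: complex mat)" "j < dim_col (1\<^sub>m 3 :: complex mat)"
  then have i: "i < 3" and j: "j < 3" by auto
  have e: "(FF * GG) $$ (i, j) = (\<Sum>k\<in>{0..<3}. w^(i*k) * w^(2*k*j)) / 3"
    using i j by (simp add: FF_def GG_def scalar_prod_def sum_divide_distrib)
  show "(FF * GG) $$ (i, j) = 1\<^sub>m 3 $$ (i, j)"
    unfolding e using less3[OF i] less3[OF j] i j
    apply (elim disjE)
    apply (simp_all add: sum3 wmul w_pow_big ws wsum)
    done
qed (auto simp: FF_def GG_def)

lemma wA: "w * (w * a) = w^2 * a" "w * (a * w^2) = a"
proof -
  have "w * (w * a) = (w * w) * a" by (simp add: mult.assoc)
  then show "w * (w * a) = w^2 * a" by (simp add: wmul)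
  have "w * (a * w^2) = a * (w * w^2)" by (simp add: ac_simps)
  then show "w * (a * w^2) = a" by (simp add: wmul)
qed

lemma GF: "GG * FF = 1\<^sub>m 3"
proof (rule eq_matI)
  fix i j assume "i < dim_row (1\<^sub>m 3 :: complex mat)" "j < dim_col (1\<^sub>m 3 :: complex mat)"
  then have i: "i < 3" and j: "j < 3" by auto
  have e: "(GG * FF) $$ (i, j) = (\<Sum>k\<in>{0..<3}. w^(2*i*k) * w^(k*j)) / 3"
    using i j by (simp add: FF_def GG_def scalar_prod_def sum_divide_distrib)
  show "(GG * FF) $$ (i, j) = 1\<^sub>m 3 $$ (i, j)"
    unfolding e using less3[OF i] less3[OF j] i j
    apply (elim disjE)
    apply (simp_all add: sum3 wmul w_pow_big ws wsum)
    done
qed (auto simp: FF_def GG_def)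

lemma PF: "map_mat of_real (Pc x y z) * FF = FF * diag3 (mu x y z)"
proof (rule eq_matI)
  fix i j assume "i < dim_row (FF * diag3 (mu x y z))" "j < dim_col (FF * diag3 (mu x y z))"
  then have i: "i < 3" and j: "j < 3" by (auto simp: FF_def diag3_def)
  have e1: "(map_mat of_real (Pc x y z) * FF) $$ (i, j) = (\<Sum>k\<in>{0..<3}. of_real (Pc x y z $$ (i,k)) * w^(k*j))"
    using i j by (simp add: FF_def Pc_def scalar_prod_def)
  have e2: "(FF * diag3 (mu x y z)) $$ (i, j) = (\<Sum>k\<in>{0..<3}. w^(i*k) * diag3 (mu x y z) $$ (k,j))"
    using i j by (simp add: FF_def diag3_def scalar_prod_def)
  show "(map_mat of_real (Pc x y z) * FF) $$ (i, j) = (FF * diag3 (mu x y z)) $$ (i, j)"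
    unfolding e1 e2 using less3[OF i] less3[OF j] i j
    apply (elim disjE)
    apply (simp_all add: sum3 Pc_def diag3_def mu_def wmul w_pow_big algebra_simps)
    apply (simp_all add: wA)
    done
qed (auto simp: FF_def diag3_def Pc_def)

definition Pm :: "real \<Rightarrow> real \<Rightarrow> real \<Rightarrow> nat \<Rightarrow> real mat" where
  "Pm x y z d = kron (Pc x y z) (1\<^sub>m d) + kron (1\<^sub>m 3) (jordan_block d 0)"

lemma Pc_carrier[simp]: "Pc x y z \<in> carrier_mat 3 3" by (simp add: Pc_def)
lemma FF_carrier[simp]: "FF \<in> carrier_mat 3 3" by (simp add: FF_def)
lemma GG_carrier[simp]: "GG \<in> carrier_mat 3 3" by (simp add: GG_def)
lemma diag3_carrier[simp]: "diag3 m \<in> carrier_mat 3 3" by (simp add: diag3_def)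

lemma dims3[simp]: "dim_row (Pc x y z) = 3" "dim_col (Pc x y z) = 3" "dim_row FF = 3" "dim_col FF = 3"
  "dim_row GG = 3" "dim_col GG = 3" "dim_row (diag3 m) = 3" "dim_col (diag3 m) = 3"
  by (simp_all add: Pc_def FF_def GG_def diag3_def)

lemma Pm_carrier: "Pm x y z d \<in> carrier_mat (3*d) (3*d)"
  unfolding Pm_def by (rule add_carrier_mat, rule kron_carrier, auto)

lemma map_Pm: assumes d: "d > 0"
  shows "map_mat complex_of_real (Pm x y z d) =
     kron (map_mat of_real (Pc x y z)) (1\<^sub>m d) + kron (1\<^sub>m 3) (jordan_block d 0)"
proof -
  have a: "map_mat complex_of_real (A + B) = map_mat of_real A + map_mat of_real B"
    if "A \<in> carrier_mat n n" "B \<in> carrier_mat n n" for A B :: "real mat" and n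
    by (rule eq_matI, insert that, auto)
  have j: "map_mat complex_of_real (jordan_block d 0) = jordan_block d 0"
    by (rule eq_matI, auto simp: jordan_block_def)
  have k1: "kron (Pc x y z) (1\<^sub>m d) \<in> carrier_mat (3*d) (3*d)" by (rule kron_carrier, auto)
  have k2: "kron (1\<^sub>m 3) (jordan_block d (0::real)) \<in> carrier_mat (3*d) (3*d)" by (rule kron_carrier, auto)
  show ?thesis unfolding Pm_def a[OF k1 k2]
    map_kron[OF Pc_carrier one_carrier_mat d] map_kron[OF one_carrier_mat jordan_block_carrier d] j
    of_real_hom.mat_hom_one ..
qed

lemma Pm_jnf: assumes d: "d > 0"
  shows "jordan_nf (map_mat complex_of_real (Pm x y z d)) [(d, mu x y z 0), (d, mu x y z 1), (d, mu x y z 2)]"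
proof -
  let ?C = "map_mat complex_of_real (Pc x y z)"
  let ?D = "diag3 (mu x y z)"
  let ?I = "1\<^sub>m d :: complex mat"
  let ?N = "jordan_block d (0::complex)"
  let ?S = "kron FF ?I"
  let ?T = "kron GG ?I"
  let ?Q = "kron ?D ?I + kron (1\<^sub>m 3) ?N"
  have C: "?C \<in> carrier_mat 3 3" by simp
  have I: "?I \<in> carrier_mat d d" by simp
  have N: "?N \<in> carrier_mat d d" by simp
  have ST: "?S * ?T = 1\<^sub>m (3*d)"
    by (subst kron_mult[OF FF_carrier GG_carrier I I d], simp add: FG kron_one[OF d])
  have TS: "?T * ?S = 1\<^sub>m (3*d)"
    by (subst kron_mult[OF GG_carrier FF_carrier I I d], simp add: GF kron_one[OF d])
  have CF: "FF * ?D * GG = ?C"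
  proof -
    have "FF * ?D * GG = ?C * FF * GG" by (simp add: PF)
    also have "\<dots> = ?C * (FF * GG)" by (rule assoc_mult_mat[OF C FF_carrier GG_carrier])
    also have "\<dots> = ?C" by (simp add: FG right_mult_one_mat[OF C])
    finally show ?thesis .
  qed
  have "?S * ?Q = ?S * kron ?D ?I + ?S * kron (1\<^sub>m 3) ?N"
    by (rule mult_add_distrib_mat[of _ "3*d" "3*d"], auto)
  also have "\<dots> = kron (FF * ?D) ?I + kron FF ?N"
    by (simp add: kron_mult[OF FF_carrier diag3_carrier I I d] kron_mult[OF FF_carrier one_carrier_mat I N d])
  finally have SQ: "?S * ?Q = kron (FF * ?D) ?I + kron FF ?N" .
  have "?S * ?Q * ?T = kron (FF * ?D) ?I * ?T + kron FF ?N * ?T"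
    unfolding SQ by (rule add_mult_distrib_mat[of _ "3*d" "3*d"], auto)
  also have "\<dots> = kron (FF * ?D * GG) ?I + kron (FF * GG) ?N"
    using kron_mult[OF mult_carrier_mat[OF FF_carrier diag3_carrier] GG_carrier I I d]
      kron_mult[OF FF_carrier GG_carrier N I d] by simp
  also have "\<dots> = map_mat complex_of_real (Pm x y z d)"
    unfolding CF FG map_Pm[OF d] by simp
  finally have eq: "map_mat complex_of_real (Pm x y z d) = ?S * ?Q * ?T" by simp
  have wit: "similar_mat_wit (map_mat complex_of_real (Pm x y z d)) ?Q ?S ?T"
    unfolding similar_mat_wit_def Let_def using eq ST TS
    by (auto simp: Pm_def)
  have "similar_mat (map_mat complex_of_real (Pm x y z d)) ?Q"
    unfolding similar_mat_def using wit by blast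
  then show ?thesis unfolding jordan_nf_def jordan3[OF d] using d by auto
qed

definition Kr :: "real mat" where "Kr = mat 2 2 (\<lambda>(a,b). if a = b then 0 else -1)"
definition E2 :: "complex mat" where "E2 = mat 2 2 (\<lambda>(a,b). if a = b then (if a = 0 then 1 else -1) else 0)"
definition F2 :: "complex mat" where "F2 = mat 2 2 (\<lambda>(a,b). if a = 1 \<and> b = 0 then -1 else 1)"
definition G2 :: "complex mat" where "G2 = mat 2 2 (\<lambda>(a,b). (if a = 0 \<and> b = 1 then -1 else 1) / 2)"

lemma less2: "(i::nat) < 2 \<Longrightarrow> i = 0 \<or> i = 1" by auto
lemma sum2: "(\<Sum>i\<in>{0..<2::nat}. f i) = f 0 + f 1"
  by (simp add: numeral_2_eq_2)

lemma c2[simp]: "Kr \<in> carrier_mat 2 2" "E2 \<in> carrier_mat 2 2" "F2 \<in> carrier_mat 2 2" "G2 \<in> carrier_mat 2 2"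
  by (simp_all add: Kr_def E2_def F2_def G2_def)

lemma F2G2: "F2 * G2 = 1\<^sub>m 2"
  by (rule eq_matI, auto simp: F2_def G2_def scalar_prod_def sum2 dest!: less2)

lemma G2F2: "G2 * F2 = 1\<^sub>m 2"
  by (rule eq_matI, auto simp: F2_def G2_def scalar_prod_def sum2 dest!: less2)

lemma FEG: "F2 * E2 * G2 = map_mat of_real Kr"
proof (rule eq_matI)
  fix i j assume "i < dim_row (map_mat complex_of_real Kr)" "j < dim_col (map_mat complex_of_real Kr)"
  then have i: "i < 2" and j: "j < 2" by (auto simp: Kr_def)
  have e: "(F2 * E2 * G2) $$ (i,j) = (\<Sum>k\<in>{0..<2}. (\<Sum>l\<in>{0..<2}. F2 $$ (i,l) * E2 $$ (l,k)) * G2 $$ (k,j))"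
    using i j by (simp add: F2_def E2_def G2_def scalar_prod_def)
  show "(F2 * E2 * G2) $$ (i,j) = map_mat complex_of_real Kr $$ (i,j)"
    unfolding e using less2[OF i] less2[OF j] i j
    by (auto simp: F2_def E2_def G2_def Kr_def sum2)
qed (auto simp: F2_def Kr_def G2_def)


lemma div2_cases: assumes "r < 2 * (n::nat)"
  shows "(r < n \<and> r div n = 0 \<and> r mod n = r) \<or> (n \<le> r \<and> r div n = 1 \<and> r mod n = r - n)"
proof (cases "r < n")
  case True then show ?thesis by auto
next
  case False
  then have "r - n < n" using assms by linarith
  then show ?thesis using False by (simp add: le_div_geq le_mod_geq)
qed

lemma kron_E2: assumes M: "M \<in> carrier_mat n n" and n: "n > 0"
  shows "kron E2 M = four_block_mat M (0\<^sub>m n n) (0\<^sub>m n n) ((-1) \<cdot>\<^sub>m M)"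
proof (rule eq_matI)
  fix i j assume "i < dim_row (four_block_mat M (0\<^sub>m n n) (0\<^sub>m n n) ((-1) \<cdot>\<^sub>m M))"
    "j < dim_col (four_block_mat M (0\<^sub>m n n) (0\<^sub>m n n) ((-1) \<cdot>\<^sub>m M))"
  then have i: "i < 2*n" and j: "j < 2*n" using M by auto
  show "kron E2 M $$ (i,j) = four_block_mat M (0\<^sub>m n n) (0\<^sub>m n n) ((-1) \<cdot>\<^sub>m M) $$ (i,j)"
    unfolding kron_index[OF c2(2) M i j] using div2_cases[OF i] div2_cases[OF j] M i j
    by (auto simp: E2_def)
qed (insert M, auto simp: E2_def)

lemma jm_append: "jordan_matrix (as @ bs) = four_block_mat (jordan_matrix as)
   (0\<^sub>m (sum_list (map fst as)) (sum_list (map fst bs))) (0\<^sub>m (sum_list (map fst bs)) (sum_list (map fst as))) (jordan_matrix bs)"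
  unfolding jordan_matrix_def map_append diag_block_mat_append Let_def
  by (simp only: jordan_matrix_dim[unfolded jordan_matrix_def])

lemma jnf_four_block: assumes a: "jordan_nf A as" and b: "jordan_nf B bs"
  and A: "A \<in> carrier_mat n n" and B: "B \<in> carrier_mat m m"
  shows "jordan_nf (four_block_mat A (0\<^sub>m n m) (0\<^sub>m m n) B) (as @ bs)"
proof -
  from a have sa: "similar_mat A (jordan_matrix as)" unfolding jordan_nf_def by auto
  from b have sb: "similar_mat B (jordan_matrix bs)" unfolding jordan_nf_def by auto
  from similar_matD[OF sa] obtain k P Q where "{A, jordan_matrix as, P, Q} \<subseteq> carrier_mat k k" by blast
  then have "A \<in> carrier_mat k k" "jordan_matrix as \<in> carrier_mat k k" by auto
  then have na: "sum_list (map fst as) = n" using A unfolding carrier_mat_def by simp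
  from similar_matD[OF sb] obtain k' P' Q' where "{B, jordan_matrix bs, P', Q'} \<subseteq> carrier_mat k' k'" by blast
  then have "B \<in> carrier_mat k' k'" "jordan_matrix bs \<in> carrier_mat k' k'" by auto
  then have nb: "sum_list (map fst bs) = m" using B unfolding carrier_mat_def by simp
  have "similar_mat (four_block_mat A (0\<^sub>m n m) (0\<^sub>m m n) B) (jordan_matrix (as @ bs))"
    unfolding jm_append na nb by (rule similar_mat_four_block_0_0[OF sa sb A B])
  moreover have "0 \<notin> fst ` set (as @ bs)" using a b unfolding jordan_nf_def by auto
  ultimately show ?thesis unfolding jordan_nf_def by blast
qed

definition Bm :: "real \<Rightarrow> real \<Rightarrow> real \<Rightarrow> nat \<Rightarrow> real mat" where
  "Bm x y z d = kron Kr (Pm x y z d)"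

lemma Bm_carrier: "Bm x y z d \<in> carrier_mat (2*(3*d)) (2*(3*d))"
  unfolding Bm_def by (rule kron_carrier[OF c2(1) Pm_carrier])

lemma Bm_jnf: assumes d: "d > 0"
  shows "\<exists>n_as. jordan_nf (map_mat complex_of_real (Bm x y z d)) n_as \<and> (d, mu x y z 1) \<in> set n_as"
proof -
  let ?n = "3*d"
  have n: "?n > 0" using d by auto
  let ?P = "map_mat complex_of_real (Pm x y z d)"
  let ?as = "[(d, mu x y z 0), (d, mu x y z 1), (d, mu x y z 2)]"
  have P: "?P \<in> carrier_mat ?n ?n" using Pm_carrier by auto
  have P': "(-1) \<cdot>\<^sub>m ?P \<in> carrier_mat ?n ?n" using P by auto
  have j1: "jordan_nf ?P ?as" by (rule Pm_jnf[OF d])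
  have j2: "jordan_nf ((-1) \<cdot>\<^sub>m ?P) (map (\<lambda>(n,a). (n, -1 * a)) ?as)"
    by (rule jordan_nf_smult[OF j1], simp)
  have jX: "jordan_nf (kron E2 ?P) (?as @ map (\<lambda>(n,a). (n, -1 * a)) ?as)"
    unfolding kron_E2[OF P n] by (rule jnf_four_block[OF j1 j2 P P'])
  let ?I = "1\<^sub>m ?n :: complex mat"
  let ?S = "kron F2 ?I"
  let ?T = "kron G2 ?I"
  have I: "?I \<in> carrier_mat ?n ?n" by simp
  have ST: "?S * ?T = 1\<^sub>m (2*?n)"
    by (subst kron_mult[OF c2(3) c2(4) I I n], simp add: F2G2 kron_one[OF n])
  have TS: "?T * ?S = 1\<^sub>m (2*?n)"
    by (subst kron_mult[OF c2(4) c2(3) I I n], simp add: G2F2 kron_one[OF n])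
  have "?S * kron E2 ?P * ?T = kron (F2 * E2) ?P * ?T"
    unfolding kron_mult[OF c2(3) c2(2) I P n] left_mult_one_mat[OF P] ..
  also have "\<dots> = kron (F2 * E2 * G2) ?P"
    unfolding kron_mult[OF mult_carrier_mat[OF c2(3) c2(2)] c2(4) P I n] right_mult_one_mat[OF P] ..
  also have "\<dots> = map_mat complex_of_real (Bm x y z d)"
    unfolding FEG Bm_def by (rule map_kron[OF c2(1) Pm_carrier n, symmetric])
  finally have eq: "map_mat complex_of_real (Bm x y z d) = ?S * kron E2 ?P * ?T" by simp
  have wit: "similar_mat_wit (map_mat complex_of_real (Bm x y z d)) (kron E2 ?P) ?S ?T"
  proof (rule similar_mat_witI[OF ST TS eq])
    show "map_mat complex_of_real (Bm x y z d) \<in> carrier_mat (2*?n) (2*?n)"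
      using Bm_carrier[of x y z d] by simp
    show "kron E2 ?P \<in> carrier_mat (2*?n) (2*?n)" by (rule kron_carrier[OF c2(2) P])
    show "?S \<in> carrier_mat (2*?n) (2*?n)" by (rule kron_carrier[OF c2(3) I])
    show "?T \<in> carrier_mat (2*?n) (2*?n)" by (rule kron_carrier[OF c2(4) I])
  qed
  then have sim: "similar_mat (map_mat complex_of_real (Bm x y z d)) (kron E2 ?P)"
    unfolding similar_mat_def by blast
  have "jordan_nf (map_mat complex_of_real (Bm x y z d)) (?as @ map (\<lambda>(n,a). (n, -1 * a)) ?as)"
    using jX sim similar_mat_trans unfolding jordan_nf_def by blast
  then show ?thesis by (intro exI[of _ "?as @ map (\<lambda>(n,a). (n, -1 * a)) ?as"], auto)
qed

lemma Pm_nonneg: assumes "x \<ge> 0" "y \<ge> 0" "z \<ge> 0" "i < 3*d" "j < 3*d"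
  shows "Pm x y z d $$ (i,j) \<ge> 0"
proof -
  have id: "i div d < 3" "j div d < 3" using assms div_lt_mult by auto
  have "Pm x y z d $$ (i,j) = kron (Pc x y z) (1\<^sub>m d) $$ (i,j) + kron (1\<^sub>m 3) (jordan_block d 0) $$ (i,j)"
    unfolding Pm_def using assms by simp
  also have "\<dots> = Pc x y z $$ (i div d, j div d) * 1\<^sub>m d $$ (i mod d, j mod d)
     + 1\<^sub>m 3 $$ (i div d, j div d) * jordan_block d 0 $$ (i mod d, j mod d)"
    using kron_index[OF Pc_carrier one_carrier_mat assms(4,5)]
      kron_index[OF one_carrier_mat jordan_block_carrier assms(4,5)] by simp
  also have "\<dots> \<ge> 0"
  proof -
    have d: "d > 0" using assms by auto
    have "Pc x y z $$ (i div d, j div d) \<ge> 0" using id assms by (simp add: Pc_def)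
    moreover have "(1\<^sub>m d :: real mat) $$ (i mod d, j mod d) \<ge> 0" using d by simp
    moreover have "(1\<^sub>m 3 :: real mat) $$ (i div d, j div d) \<ge> 0" using id by simp
    moreover have "(jordan_block d 0 :: real mat) $$ (i mod d, j mod d) \<ge> 0" using d by (simp add: jordan_block_def)
    ultimately show ?thesis by simp
  qed
  finally show ?thesis .
qed

lemma Bm_pc: assumes "x \<ge> 0" "y \<ge> 0" "z \<ge> 0" "d > 0"
  shows "purely_competitive (Bm x y z d)"
proof -
  let ?n = "3*d"
  have B: "Bm x y z d \<in> carrier_mat (2*?n) (2*?n)" by (rule Bm_carrier)
  have n: "?n > 0" using assms by auto
  have e: "Bm x y z d $$ (i,j) = Kr $$ (i div ?n, j div ?n) * Pm x y z d $$ (i mod ?n, j mod ?n)"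
    if "i < 2*?n" "j < 2*?n" for i j
    unfolding Bm_def by (rule kron_index[OF c2(1) Pm_carrier that])
  have K: "Kr $$ (a,b) \<le> 0" "Kr $$ (a,a) = 0" if "a < 2" "b < 2" for a b
    using that by (auto simp: Kr_def)
  have P: "Pm x y z d $$ (i mod ?n, j mod ?n) \<ge> 0" for i j
    using Pm_nonneg[OF assms(1-3)] n by auto
  have od: "Bm x y z d $$ (i,j) \<le> 0" if "i < 2*?n" "j < 2*?n" for i j
  proof -
    have "i div ?n < 2" "j div ?n < 2" using that div_lt_mult by auto
    then show ?thesis unfolding e[OF that] using K P[of i j] mult_nonpos_nonneg by blast
  qed
  have dg: "Bm x y z d $$ (i,i) = 0" if "i < 2*?n" for i
  proof -
    have "i div ?n < 2" using that div_lt_mult by auto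
    then show ?thesis unfolding e[OF that that] using K by simp
  qed
  show ?thesis unfolding purely_competitive_def using B od dg by auto
qed

lemma choose_xyz: "\<exists>x y z. x \<ge> 0 \<and> y \<ge> 0 \<and> z \<ge> 0 \<and> mu x y z 1 = (l :: complex)"
proof -
  define a where "a = Re l"
  define b where "b = Im l"
  define s where "s = 2 * b / sqrt 3"
  define y where "y = (\<bar>s\<bar> + s) / 2 + \<bar>a\<bar>"
  define z where "z = (\<bar>s\<bar> - s) / 2 + \<bar>a\<bar>"
  define x where "x = a + \<bar>s\<bar> / 2 + \<bar>a\<bar>"
  have "x \<ge> 0" "y \<ge> 0" "z \<ge> 0" unfolding x_def y_def z_def by auto
  moreover have "mu x y z 1 = l"
  proof -
    have "mu x y z 1 = of_real x + of_real y * Complex (-1/2) (sqrt 3 / 2) + of_real z * Complex (-1/2) (- sqrt 3 / 2)"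
      unfolding mu_def using w2 by (simp add: w_def)
    also have "\<dots> = Complex (x - y/2 - z/2) (sqrt 3 / 2 * (y - z))"
      by (simp add: complex_eq_iff algebra_simps)
    also have "x - y/2 - z/2 = a" unfolding x_def y_def z_def by (simp add: field_simps)
    also have "y - z = s" unfolding y_def z_def by (simp add: field_simps)
    also have "sqrt 3 / 2 * s = b" unfolding s_def by simp
    finally show ?thesis unfolding a_def b_def by simp
  qed
  ultimately show ?thesis by blast
qed

lemma pc_four_block: assumes a: "purely_competitive A" and b: "purely_competitive B"
  and A: "A \<in> carrier_mat n n" and B: "B \<in> carrier_mat m m"
  shows "purely_competitive (four_block_mat A (0\<^sub>m n m) (0\<^sub>m m n) B)"
proof -
  have dims: "dim_row (four_block_mat A (0\<^sub>m n m) (0\<^sub>m m n) B) = n + m"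
    "dim_col (four_block_mat A (0\<^sub>m n m) (0\<^sub>m m n) B) = n + m" using A B by auto
  have od: "four_block_mat A (0\<^sub>m n m) (0\<^sub>m m n) B $$ (i,j) \<le> 0" if "i < n + m" "j < n + m" "i \<noteq> j" for i j
  proof -
    have "four_block_mat A (0\<^sub>m n m) (0\<^sub>m m n) B $$ (i,j) =
      (if i < n then if j < n then A $$ (i,j) else 0 else if j < n then 0 else B $$ (i - n, j - n))"
      using that A B by simp
    moreover have "A $$ (i,j) \<le> 0" if "i < n" "j < n" "i \<noteq> j" using a A that unfolding purely_competitive_def by auto
    moreover have "B $$ (i-n,j-n) \<le> 0" if "\<not> i < n" "\<not> j < n" "i \<noteq> j" "i < n + m" "j < n + m"
      using b B that unfolding purely_competitive_def by auto
    ultimately show ?thesis using that by auto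
  qed
  have dg: "four_block_mat A (0\<^sub>m n m) (0\<^sub>m m n) B $$ (i,i) = 0" if "i < n + m" for i
  proof -
    have "four_block_mat A (0\<^sub>m n m) (0\<^sub>m m n) B $$ (i,i) =
      (if i < n then A $$ (i,i) else B $$ (i - n, i - n))"
      using that A B by simp
    moreover have "A $$ (i,i) = 0" if "i < n" using a A that unfolding purely_competitive_def by auto
    moreover have "B $$ (i-n,i-n) = 0" if "\<not> i < n" "i < n + m"
      using b B that unfolding purely_competitive_def by auto
    ultimately show ?thesis using that by auto
  qed
  show ?thesis unfolding purely_competitive_def dims using od dg by auto
qed

theorem lemma9:
  fixes blocks :: "(nat \<times> complex) list"
  assumes "\<forall>(d, ev) \<in> set blocks. d \<ge> 1"
  shows "\<exists>n (B :: real mat). B \<in> carrier_mat n n \<and> purely_competitive B \<and>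
           (\<exists>n_as. jordan_nf (map_mat complex_of_real B) n_as \<and> mset blocks \<subseteq># mset n_as)"
  using assms
proof (induct blocks)
  case Nil
  have "map_mat complex_of_real (0\<^sub>m 0 0) = jordan_matrix []"
    by (rule eq_matI, auto simp: jordan_matrix_def)
  then have "jordan_nf (map_mat complex_of_real (0\<^sub>m 0 0)) []"
    unfolding jordan_nf_def by (auto intro!: similar_mat_refl[of _ 0])
  moreover have "purely_competitive (0\<^sub>m 0 0)" unfolding purely_competitive_def by simp
  ultimately show ?case by (intro exI[of _ 0] exI[of _ "0\<^sub>m 0 0"], auto)
next
  case (Cons bl blocks)
  obtain d l where bl: "bl = (d, l)" by force
  from Cons(2) bl have d: "d > 0" by auto
  from Cons(1) Cons(2) obtain n B n_as where B: "B \<in> carrier_mat n n" and pcB: "purely_competitive B"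
    and jB: "jordan_nf (map_mat complex_of_real B) n_as" and sub: "mset blocks \<subseteq># mset n_as" by auto
  obtain x y z where xyz: "x \<ge> 0" "y \<ge> 0" "z \<ge> 0" and mu: "mu x y z 1 = l"
    using choose_xyz by blast
  let ?m = "2*(3*d)"
  let ?B1 = "Bm x y z d"
  have B1: "?B1 \<in> carrier_mat ?m ?m" by (rule Bm_carrier)
  from Bm_jnf[OF d, of x y z] mu obtain as1 where j1: "jordan_nf (map_mat complex_of_real ?B1) as1"
    and mem: "(d, l) \<in> set as1" by auto
  let ?N = "four_block_mat ?B1 (0\<^sub>m ?m n) (0\<^sub>m n ?m) B"
  have N: "?N \<in> carrier_mat (?m + n) (?m + n)" using B1 B by auto
  have pc: "purely_competitive ?N" by (rule pc_four_block[OF Bm_pc[OF xyz d] pcB B1 B])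
  have mp: "map_mat complex_of_real ?N = four_block_mat (map_mat complex_of_real ?B1) (0\<^sub>m ?m n) (0\<^sub>m n ?m) (map_mat complex_of_real B)"
  proof -
    have z: "map_mat complex_of_real (0\<^sub>m a b) = 0\<^sub>m a b" for a b by (rule eq_matI, auto)
    show ?thesis unfolding map_four_block_mat[OF B1 zero_carrier_mat zero_carrier_mat B] z ..
  qed
  have B1c: "map_mat complex_of_real ?B1 \<in> carrier_mat ?m ?m" using B1 by simp
  have Bc: "map_mat complex_of_real B \<in> carrier_mat n n" using B by simp
  have jN: "jordan_nf (map_mat complex_of_real ?N) (as1 @ n_as)"
    unfolding mp by (rule jnf_four_block[OF j1 jB B1c Bc])
  have "mset (bl # blocks) = {#(d,l)#} + mset blocks" using bl by simp
  also have "\<dots> \<subseteq># mset as1 + mset n_as"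
    by (rule subset_mset.add_mono[OF _ sub], simp add: mem)
  also have "\<dots> = mset (as1 @ n_as)" by simp
  finally have "mset (bl # blocks) \<subseteq># mset (as1 @ n_as)" .
  with N pc jN show ?case by blast
qed

end
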